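(* Let $X$ be a countably infinite set. The lattice $\mathrm{Cl}_{loc}(X)$ of local clones on $X$ is not embeddable (as a sublattice, i.e. via an injective map preserving binary meets and joins) into any algebraic lattice with countably many compact elements.
   Context: A clone on $X$ is a set of finitary operations $X^n\to X$ ($n\ge1$) containing all projections $\pi^n_k(x_1,\dots,x_n)=x_k$ and closed under composition. Giving $X$ the discrete topology and $X^{X^n}$ the product topology, a clone is local if for each $n$ its set of $n$-ary operations is closed in $X^{X^n}$; equivalently, an $n$-ary operation $g$ belongs to the clone whenever for every finite $B\subseteq X^n$ some $n$-ary operation of the clone agrees with $g$ on $B$. $\mathrm{Cl}_{loc}(X)$ is the complete lattice of local clones on $X$ ordered by inclusion. An element $a$ of a complete lattice is compact if whenever $a\le\bigvee A$ there is a finite $A'\subseteq A$ with $a\le\bigvee A'$; a complete lattice is algebraic if every element is a join of compact elements. *)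

theory Defs
  imports Main "HOL-Library.Countable_Set"
begin

text \<open>An n-ary operation on the type 'a is represented as a function on lists
that is determined by its values on lists of length n and is undefined elsewhere.\<close>

definition ops :: "nat \<Rightarrow> ('a list \<Rightarrow> 'a) set" where
  "ops n = {f. \<forall>xs. length xs \<noteq> n \<longrightarrow> f xs = undefined}"

definition proj :: "nat \<Rightarrow> nat \<Rightarrow> 'a list \<Rightarrow> 'a" where
  "proj n k = (\<lambda>xs. if length xs = n then xs ! k else undefined)"

definition comp_op :: "nat \<Rightarrow> ('a list \<Rightarrow> 'a) \<Rightarrow> ('a list \<Rightarrow> 'a) list \<Rightarrow> 'a list \<Rightarrow> 'a" where
  "comp_op n f gs = (\<lambda>xs. if length xs = n then f (map (\<lambda>g. g xs) gs) else undefined)"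

type_synonym 'a clone = "nat \<Rightarrow> ('a list \<Rightarrow> 'a) set"

definition is_clone :: "'a clone \<Rightarrow> bool" where
  "is_clone C \<longleftrightarrow>
     C 0 = {} \<and>
     (\<forall>n. C n \<subseteq> ops n) \<and>
     (\<forall>n k. 1 \<le> n \<and> k < n \<longrightarrow> proj n k \<in> C n) \<and>
     (\<forall>m n f gs. 1 \<le> n \<and> f \<in> C m \<and> length gs = m \<and> set gs \<subseteq> C n
         \<longrightarrow> comp_op n f gs \<in> C n)"

definition is_local_clone :: "'a clone \<Rightarrow> bool" where
  "is_local_clone C \<longleftrightarrow> is_clone C \<and>
     (\<forall>n \<ge> 1. \<forall>g \<in> ops n.
        (\<forall>B. finite B \<and> B \<subseteq> {xs. length xs = n} \<longrightarrow> (\<exists>f \<in> C n. \<forall>xs \<in> B. f xs = g xs))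
        \<longrightarrow> g \<in> C n)"

definition local_clones :: "'a clone set" where
  "local_clones = {C. is_local_clone C}"

definition loc_meet :: "'a clone \<Rightarrow> 'a clone \<Rightarrow> 'a clone" where
  "loc_meet C D = (\<lambda>n. C n \<inter> D n)"

definition loc_join :: "'a clone \<Rightarrow> 'a clone \<Rightarrow> 'a clone" where
  "loc_join C D = (\<lambda>n. \<Inter>{E n | E. is_local_clone E \<and> (\<forall>k. C k \<subseteq> E k) \<and> (\<forall>k. D k \<subseteq> E k)})"

definition compact_el :: "'b::complete_lattice \<Rightarrow> bool" where
  "compact_el a \<longleftrightarrow> (\<forall>A. a \<le> Sup A \<longrightarrow> (\<exists>A'. finite A' \<and> A' \<subseteq> A \<and> a \<le> Sup A'))"

definition algebraic_lattice :: "'b::complete_lattice itself \<Rightarrow> bool" where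
  "algebraic_lattice _ \<longleftrightarrow> (\<forall>a::'b. a = Sup {c. compact_el c \<and> c \<le> a})"

definition lattice_embedding :: "('a clone \<Rightarrow> 'b::complete_lattice) \<Rightarrow> bool" where
  "lattice_embedding h \<longleftrightarrow> inj_on h local_clones \<and>
     (\<forall>C \<in> local_clones. \<forall>D \<in> local_clones.
        h (loc_meet C D) = inf (h C) (h D) \<and> h (loc_join C D) = sup (h C) (h D))"

end

theory Submission
  imports Defs
begin

definition opn :: "nat \<Rightarrow> ('a \<Rightarrow> 'a) \<Rightarrow> nat \<Rightarrow> 'a list \<Rightarrow> 'a" where
  "opn n s k = (\<lambda>xs. if length xs = n then s (xs ! k) else undefined)"

definition Cl :: "('a \<Rightarrow> 'a) set \<Rightarrow> 'a clone" where
  "Cl S n = {opn n s k | s k. s \<in> S \<and> k < n}"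

lemma Cl_finite: "finite S \<Longrightarrow> finite (Cl S n)"
proof -
  assume "finite S"
  have "Cl S n = (\<lambda>(s,k). opn n s k) ` (S \<times> {..<n})"
    unfolding Cl_def by auto
  thus ?thesis using \<open>finite S\<close> by simp
qed

lemma Cl_local:
  assumes fin: "finite S" and idS: "id \<in> S" and cmp: "\<And>s t. s \<in> S \<Longrightarrow> t \<in> S \<Longrightarrow> s \<circ> t \<in> S"
  shows "is_local_clone (Cl S)"
proof -
  have c0: "Cl S 0 = {}" unfolding Cl_def by auto
  have cops: "\<forall>n. Cl S n \<subseteq> ops n" unfolding Cl_def ops_def opn_def by auto
  have cproj: "\<forall>n k. 1 \<le> n \<and> k < n \<longrightarrow> proj n k \<in> Cl S n"
  proof (intro allI impI)
    fix n k :: nat assume "1 \<le> n \<and> k < n"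
    hence "proj n k = opn n id k" by (auto simp: proj_def opn_def)
    thus "proj n k \<in> Cl S n" using idS \<open>1 \<le> n \<and> k < n\<close> unfolding Cl_def by blast
  qed
  have ccomp: "\<forall>m n f gs. 1 \<le> n \<and> f \<in> Cl S m \<and> length gs = m \<and> set gs \<subseteq> Cl S n
         \<longrightarrow> comp_op n f gs \<in> Cl S n"
  proof (intro allI impI)
    fix m n f and gs :: "('a list \<Rightarrow> 'a) list"
    assume a: "1 \<le> n \<and> f \<in> Cl S m \<and> length gs = m \<and> set gs \<subseteq> Cl S n"
    then obtain s k where s: "s \<in> S" "k < m" "f = opn m s k" unfolding Cl_def by blast
    have "gs ! k \<in> Cl S n" using a s by auto
    then obtain t j where t: "t \<in> S" "j < n" "gs ! k = opn n t j" unfolding Cl_def by blast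
    have "comp_op n f gs = opn n (s \<circ> t) j"
    proof
      fix xs :: "'a list"
      show "comp_op n f gs xs = opn n (s \<circ> t) j xs"
        using a s t by (auto simp: comp_op_def opn_def)
    qed
    thus "comp_op n f gs \<in> Cl S n" using cmp[OF s(1) t(1)] t(2) unfolding Cl_def by blast
  qed
  have cloc: "\<forall>n \<ge> 1. \<forall>g \<in> ops n.
        (\<forall>B. finite B \<and> B \<subseteq> {xs. length xs = n} \<longrightarrow> (\<exists>f \<in> Cl S n. \<forall>xs \<in> B. f xs = g xs))
        \<longrightarrow> g \<in> Cl S n"
  proof (intro allI impI ballI)
    fix n :: nat and g
    assume g: "g \<in> ops n"
      and H: "\<forall>B. finite B \<and> B \<subseteq> {xs. length xs = n} \<longrightarrow> (\<exists>f \<in> Cl S n. \<forall>xs \<in> B. f xs = g xs)"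
    show "g \<in> Cl S n"
    proof (rule ccontr)
      assume gn: "g \<notin> Cl S n"
      have "\<forall>f \<in> Cl S n. \<exists>xs. length xs = n \<and> f xs \<noteq> g xs"
      proof
        fix f assume f: "f \<in> Cl S n"
        show "\<exists>xs. length xs = n \<and> f xs \<noteq> g xs"
        proof (rule ccontr)
          assume "\<not> ?thesis"
          hence ne: "\<forall>xs. length xs = n \<longrightarrow> f xs = g xs" by blast
          have fo: "f \<in> ops n" using f cops by blast
          have "f = g"
          proof
            fix xs :: "'a list"
            show "f xs = g xs" using ne fo g unfolding ops_def by (cases "length xs = n") auto
          qed
          thus False using f gn by simp
        qed
      qed
      then obtain w where w: "\<forall>f \<in> Cl S n. length (w f) = n \<and> f (w f) \<noteq> g (w f)" by (rule bchoice[elim_format]) blast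
      have "finite (w ` Cl S n) \<and> w ` Cl S n \<subseteq> {xs. length xs = n}"
        using Cl_finite[OF fin] w by auto
      then obtain f where "f \<in> Cl S n" "\<forall>xs \<in> w ` Cl S n. f xs = g xs" using H by blast
      thus False using w by auto
    qed
  qed
  show ?thesis unfolding is_local_clone_def is_clone_def using c0 cops cproj ccomp cloc by blast
qed

lemma opn_eq:
  assumes "opn n s k = opn n t j" "k < n" "j < n"
  shows "(k = j \<and> s = t) \<or> (k \<noteq> j \<and> (\<forall>x y. s x = t y))"
proof (cases "k = j")
  case True
  have "s x = t x" for x
    using fun_cong[OF assms(1), of "replicate n x"] True assms by (simp add: opn_def)
  thus ?thesis using True by auto
next
  case False
  have "s x = t y" for x y
    using fun_cong[OF assms(1), of "(replicate n x)[j := y]"] False assms by (simp add: opn_def)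
  thus ?thesis using False by auto
qed

lemma Cl_inter:
  fixes F G :: "'a \<Rightarrow> 'a"
  assumes two: "\<And>x::'a. \<exists>y. y \<noteq> x" and FG: "F \<noteq> G" and F: "F \<noteq> id" and G: "G \<noteq> id"
  shows "Cl {id, F} n \<inter> Cl {id, G} n = Cl {id} n"
proof
  show "Cl {id} n \<subseteq> Cl {id, F} n \<inter> Cl {id, G} n" unfolding Cl_def by auto
  have noid: "\<not> (\<forall>x y. H x = y)" for H :: "'a \<Rightarrow> 'a"
    using two by metis
  have noid2: "\<not> (\<forall>x y. x = H y)" for H :: "'a \<Rightarrow> 'a"
    using two by metis
  show "Cl {id, F} n \<inter> Cl {id, G} n \<subseteq> Cl {id} n"
  proof
    fix f assume "f \<in> Cl {id, F} n \<inter> Cl {id, G} n"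
    then obtain s k t j where st: "s \<in> {id, F}" "k < n" "f = opn n s k" "t \<in> {id, G}" "j < n" "f = opn n t j"
      unfolding Cl_def by blast
    have e: "(k = j \<and> s = t) \<or> (k \<noteq> j \<and> (\<forall>x y. s x = t y))" using opn_eq[of n s k t j] st by simp
    show "f \<in> Cl {id} n"
    proof (cases "s = id")
      case True thus ?thesis using st unfolding Cl_def by blast
    next
      case sF: False
      hence sF': "s = F" using st by auto
      show ?thesis
      proof (cases "t = id")
        case True
        then show ?thesis using e sF' F noid[of F] by auto
      next
        case False
        hence "t = G" using st by auto
        have "F = G" if "\<forall>x y. F x = G y" using that by auto
        thus ?thesis using e sF' \<open>t = G\<close> FG by auto
      qed
    qed
  qed
qed

lemma Pow_uncountable:
  assumes "countable Y" "infinite Y"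
  shows "\<not> countable (Pow Y)"
proof
  assume c: "countable (Pow Y)"
  define f where "f y = from_nat_into (Pow Y) (to_nat_on Y y)" for y
  define D where "D = {y \<in> Y. y \<notin> f y}"
  have "D \<in> Pow Y" unfolding D_def by auto
  then obtain n where n: "from_nat_into (Pow Y) n = D" using from_nat_into_surj[OF c] by blast
  obtain y where y: "y \<in> Y" "to_nat_on Y y = n" using to_nat_on_surj[OF assms] by blast
  have "f y = D" using n y unfolding f_def by simp
  thus False using y(1) unfolding D_def by blast
qed

theorem corollary2p12:
  assumes "countable (UNIV :: 'a set)" and "infinite (UNIV :: 'a set)"
    and "algebraic_lattice TYPE('b::complete_lattice)"
    and "countable {c :: 'b. compact_el c}"
  shows "\<not> (\<exists>h :: 'a clone \<Rightarrow> 'b. lattice_embedding h)"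
proof
  assume "\<exists>h :: 'a clone \<Rightarrow> 'b. lattice_embedding h"
  then obtain h :: "'a clone \<Rightarrow> 'b" where h: "lattice_embedding h" by blast
  have two: "\<And>x::'a. \<exists>y. y \<noteq> x"
  proof -
    fix x :: 'a
    have "UNIV \<noteq> {x}"
    proof
      assume "UNIV = {x}"
      hence "finite (UNIV::'a set)" by (metis finite.emptyI finite_insert)
      thus False using assms(2) by simp
    qed
    thus "\<exists>y. y \<noteq> x" by blast
  qed
  obtain a0 :: 'a where True by simp
  obtain b :: 'a where ba: "b \<noteq> a0" using two by blast
  define Y where "Y = UNIV - {a0, b}"
  have Yc: "countable Y" using assms(1) unfolding Y_def by (rule countable_subset[rotated]) simp
  have Yi: "infinite Y" using assms(2) unfolding Y_def by simp
  define Fm where "Fm T = (\<lambda>x. if x \<in> T then x else a0)" for T :: "'a set"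
  define J where "J = Cl {id :: 'a \<Rightarrow> 'a}"
  define K where "K T = Cl {id, Fm T}" for T
  have Fidem: "Fm T \<circ> Fm T = Fm T" if "T \<in> Pow Y" for T
    using that unfolding Fm_def Y_def by (auto simp: fun_eq_iff)
  have Fnid: "Fm T \<noteq> id" if "T \<in> Pow Y" for T
  proof
    assume "Fm T = id"
    hence "Fm T b = b" by simp
    moreover have "b \<notin> T" using that unfolding Y_def by blast
    ultimately show False using ba unfolding Fm_def by simp
  qed
  have Finj: "Fm T \<noteq> Fm T'" if "T \<in> Pow Y" "T' \<in> Pow Y" "T \<noteq> T'" for T T'
  proof
    assume eq: "Fm T = Fm T'"
    have a0T: "a0 \<notin> T" "a0 \<notin> T'" using that unfolding Y_def by blast+
    have "x \<in> T \<longleftrightarrow> x \<in> T'" for x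
    proof
      assume x: "x \<in> T"
      hence "x \<noteq> a0" using a0T by blast
      moreover have "Fm T' x = x" using fun_cong[OF eq, of x] x unfolding Fm_def by simp
      ultimately show "x \<in> T'" unfolding Fm_def by (cases "x \<in> T'") simp_all
    next
      assume x: "x \<in> T'"
      hence "x \<noteq> a0" using a0T by blast
      moreover have "Fm T x = x" using fun_cong[OF eq, of x] x unfolding Fm_def by simp
      ultimately show "x \<in> T" unfolding Fm_def by (cases "x \<in> T") simp_all
    qed
    thus False using that by blast
  qed
  have Jl: "J \<in> local_clones" unfolding J_def local_clones_def
    by (rule CollectI, rule Cl_local) simp_all
  have Kl: "K T \<in> local_clones" if "T \<in> Pow Y" for T
    unfolding K_def local_clones_def
  proof (rule CollectI, rule Cl_local)
    fix s t assume "s \<in> {id, Fm T}" "t \<in> {id, Fm T}"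
    thus "s \<circ> t \<in> {id, Fm T}" using Fidem[OF that] by auto
  qed simp_all
  have sub: "Cl {id} n \<subseteq> Cl {id, F} n" for n and F :: "'a \<Rightarrow> 'a"
    unfolding Cl_def by blast
  have KJ: "loc_meet (K T) J = J" for T
    unfolding loc_meet_def K_def J_def
    by (rule ext) (use sub in blast)
  have KK: "loc_meet (K T) (K T') = J" if "T \<in> Pow Y" "T' \<in> Pow Y" "T \<noteq> T'" for T T'
    unfolding loc_meet_def K_def J_def
    by (rule ext) (rule Cl_inter[OF two Finj[OF that] Fnid[OF that(1)] Fnid[OF that(2)]])
  have KneJ: "K T \<noteq> J" if "T \<in> Pow Y" for T
  proof
    assume KJe: "K T = J"
    have m: "opn 1 (Fm T) 0 \<in> K T 1" unfolding K_def Cl_def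
      by (rule CollectI, rule exI[of _ "Fm T"], rule exI[of _ 0]) simp
    have "opn 1 (Fm T) 0 \<in> J 1" using m unfolding KJe .
    hence "\<exists>s k. opn 1 (Fm T) 0 = opn 1 s k \<and> s \<in> {id} \<and> k < 1" unfolding J_def Cl_def by (rule CollectD)
    then obtain s k where k: "opn 1 (Fm T) 0 = opn 1 s k" "s \<in> {id}" "k < 1" by (elim exE conjE)
    have "s = id" using k(2) by simp
    have "k = 0" using k(3) by arith
    have "opn 1 (Fm T) 0 = opn 1 id 0" using k(1) unfolding \<open>k = 0\<close> \<open>s = id\<close> .
    from opn_eq[OF this] have "Fm T = id" by simp
    thus False using Fnid[OF that] by blast
  qed
  have hemb: "inj_on h local_clones" and hmeet: "\<And>C D. C \<in> local_clones \<Longrightarrow> D \<in> local_clones \<Longrightarrow> h (loc_meet C D) = inf (h C) (h D)"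
    using h unfolding lattice_embedding_def by blast+
  have ex: "\<exists>c. compact_el c \<and> c \<le> h (K T) \<and> \<not> c \<le> h J" if "T \<in> Pow Y" for T
  proof (rule ccontr)
    assume "\<not> ?thesis"
    hence "\<forall>c \<in> {c. compact_el c \<and> c \<le> h (K T)}. c \<le> h J" by auto
    hence "Sup {c. compact_el c \<and> c \<le> h (K T)} \<le> h J" by (intro Sup_least) blast
    moreover have "h (K T) = Sup {c. compact_el c \<and> c \<le> h (K T)}" using assms(3) unfolding algebraic_lattice_def by blast
    ultimately have le1: "h (K T) \<le> h J" by simp
    have "inf (h (K T)) (h J) = h J" using hmeet[OF Kl[OF that] Jl] KJ[of T] by simp
    hence "h J \<le> h (K T)" by (metis inf.cobounded1)
    hence "h (K T) = h J" using le1 by (rule order.antisym[rotated])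
    thus False using inj_onD[OF hemb _ Kl[OF that] Jl] KneJ[OF that] by blast
  qed
  hence "\<forall>T\<in>Pow Y. \<exists>c. compact_el c \<and> c \<le> h (K T) \<and> \<not> c \<le> h J" by blast
  then obtain cf where cf0: "\<forall>T\<in>Pow Y. compact_el (cf T) \<and> cf T \<le> h (K T) \<and> \<not> cf T \<le> h J"
    by (rule bchoice[elim_format]) blast
  have cf: "\<And>T. T \<in> Pow Y \<Longrightarrow> compact_el (cf T) \<and> cf T \<le> h (K T) \<and> \<not> cf T \<le> h J"
    using cf0 by blast
  have "inj_on cf (Pow Y)"
  proof (rule inj_onI, rule ccontr)
    fix T T' assume T: "T \<in> Pow Y" "T' \<in> Pow Y" "cf T = cf T'" "T \<noteq> T'"
    have "cf T \<le> inf (h (K T)) (h (K T'))" using cf[OF T(1)] cf[OF T(2)] T(3) by simp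
    also have "\<dots> = h J" using hmeet[OF Kl[OF T(1)] Kl[OF T(2)]] KK[OF T(1,2,4)] by simp
    finally show False using cf[OF T(1)] by blast
  qed
  moreover have "cf ` Pow Y \<subseteq> {c. compact_el c}" using cf by auto
  ultimately have "countable (Pow Y)"
    using countable_subset[OF _ assms(4)] countable_image_inj_on by blast
  thus False using Pow_uncountable[OF Yc Yi] by simp
qed

end
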